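(* Let $(A,B)$ be a Katsura pair. Then the KEP-action $(G_B,E_A)$ is contracting if and only if $\limsup_{n\to\infty}\left(\max_{\mu\in E^n_{A,\infty}}\frac{|B_\mu|}{A_\mu}\right)^{1/n}<1$.
   Context: Katsura pair: $N\in\mathbb{N}$, $A\in M_N(\mathbb{N})$ (nonnegative integers), $B\in M_N(\mathbb{Z})$ with $A_{ij}=0\Rightarrow B_{ij}=0$. Graph $E_A$: vertices $\{1,\dots,N\}$, edges $e_{i,j,m}$ ($0\le m<A_{ij}$), $r=i$, $s=j$; $B_e=B_{r(e)s(e)}$. For a path $\mu=e_{i_0,i_1,r_1}\cdots e_{i_{n-1},i_n,r_n}$, $A_\mu=\prod_tA_{i_ti_{t+1}}$, $B_\mu=\prod_tB_{i_ti_{t+1}}$. The group bundle $\mathbb{Z}\times E_A^0$ (elements $a_i^k$) acts by $a_i^k\cdot e_{i,j,m}=e_{i,j,\hat m}$, $a_i^k|_{e_{i,j,m}}=a_j^{\hat k}$ with $kB_{ij}+m=\hat kA_{ij}+\hat m$, $0\le\hat m<A_{ij}$, extended recursively to paths; $G_B$ is the faithful quotient and $(G_B,E_A)$ the KEP-action; $(G_B)_i$ its isotropy group at $i$. $E^0_{A,\infty}=\{i:(G_B)_i\text{ infinite}\}$, and $E_{A,\infty}$ is the subgraph with vertices $E^0_{A,\infty}$ and edges $\{e:s(e)\in E^0_{A,\infty},B_e\ne0\}$; $E^n_{A,\infty}$ its paths of length $n$. Contracting: there is a finite $F\subseteq G_B$ such that for every $g$ there is $n$ with $g|_\mu\in F$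 for all paths $\mu\in d(g)E_A^k$, $k\ge n$. *)

theory Defs
  imports Complex_Main "HOL-Library.Extended_Real" "HOL-Library.Liminf_Limsup"
begin

text \<open>Katsura pairs. Vertices are 0,...,N-1 (0-based). Matrices are functions
  A :: nat => nat => nat and B :: nat => nat => int; only entries with indices below N matter.\<close>

definition katsura_pair :: "nat \<Rightarrow> (nat \<Rightarrow> nat \<Rightarrow> nat) \<Rightarrow> (nat \<Rightarrow> nat \<Rightarrow> int) \<Rightarrow> bool" where
  "katsura_pair N A B \<longleftrightarrow> (\<forall>i<N. \<forall>j<N. A i j = 0 \<longrightarrow> B i j = 0)"

text \<open>An edge e_{i,j,m} is the triple (i,j,m); range r(e) = i, source s(e) = j.\<close>
type_synonym edge = "nat \<times> nat \<times> nat"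

definition rg :: "edge \<Rightarrow> nat" where "rg e = fst e"
definition sc :: "edge \<Rightarrow> nat" where "sc e = fst (snd e)"

definition edges :: "nat \<Rightarrow> (nat \<Rightarrow> nat \<Rightarrow> nat) \<Rightarrow> edge set" where
  "edges N A = {(i,j,m). i < N \<and> j < N \<and> m < A i j}"

definition composable :: "edge list \<Rightarrow> bool" where
  "composable \<mu> \<longleftrightarrow> (\<forall>t. Suc t < length \<mu> \<longrightarrow> sc (\<mu> ! t) = rg (\<mu> ! Suc t))"

text \<open>Paths of length n in E_A starting (in the range sense) at vertex i: the set iE_A^n.
  For n = 0 this is the vertex i, represented by the empty list.\<close>
definition paths_from :: "nat \<Rightarrow> (nat \<Rightarrow> nat \<Rightarrow> nat) \<Rightarrow> nat \<Rightarrow> nat \<Rightarrow> edge list set" where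
  "paths_from N A i n = {\<mu>. length \<mu> = n \<and> set \<mu> \<subseteq> edges N A \<and> composable \<mu> \<and>
       (\<mu> \<noteq> [] \<longrightarrow> rg (hd \<mu>) = i)}"

text \<open>Action of a_i^k on an edge e_{i,j,m}: k B_ij + m = khat A_ij + mhat with 0 <= mhat < A_ij.\<close>
definition edge_act :: "(nat \<Rightarrow> nat \<Rightarrow> nat) \<Rightarrow> (nat \<Rightarrow> nat \<Rightarrow> int) \<Rightarrow> int \<Rightarrow> edge \<Rightarrow> edge" where
  "edge_act A B k e = (case e of (i,j,m) \<Rightarrow>
      (i, j, nat ((k * B i j + int m) mod int (A i j))))"

definition edge_res :: "(nat \<Rightarrow> nat \<Rightarrow> nat) \<Rightarrow> (nat \<Rightarrow> nat \<Rightarrow> int) \<Rightarrow> int \<Rightarrow> edge \<Rightarrow> int" where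
  "edge_res A B k e = (case e of (i,j,m) \<Rightarrow> (k * B i j + int m) div int (A i j))"

fun path_act :: "(nat \<Rightarrow> nat \<Rightarrow> nat) \<Rightarrow> (nat \<Rightarrow> nat \<Rightarrow> int) \<Rightarrow> int \<Rightarrow> edge list \<Rightarrow> edge list" where
  "path_act A B k [] = []"
| "path_act A B k (e # \<mu>) = edge_act A B k e # path_act A B (edge_res A B k e) \<mu>"

fun path_res :: "(nat \<Rightarrow> nat \<Rightarrow> nat) \<Rightarrow> (nat \<Rightarrow> nat \<Rightarrow> int) \<Rightarrow> int \<Rightarrow> edge list \<Rightarrow> int" where
  "path_res A B k [] = k"
| "path_res A B k (e # \<mu>) = path_res A B (edge_res A B k e) \<mu>"

definition res_vertex :: "nat \<Rightarrow> edge list \<Rightarrow> nat" where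
  "res_vertex i \<mu> = (if \<mu> = [] then i else sc (last \<mu>))"

text \<open>Faithful quotient: a_i^k and a_i^k' are identified iff they act identically on iE_A^*.\<close>
definition same_act :: "nat \<Rightarrow> (nat \<Rightarrow> nat \<Rightarrow> nat) \<Rightarrow> (nat \<Rightarrow> nat \<Rightarrow> int) \<Rightarrow> nat \<Rightarrow> int \<Rightarrow> int \<Rightarrow> bool" where
  "same_act N A B i k k' \<longleftrightarrow>
     (\<forall>n. \<forall>\<mu>\<in>paths_from N A i n. path_act A B k \<mu> = path_act A B k' \<mu>)"

text \<open>The element of G_B represented by a_i^k (its equivalence class).\<close>
definition gclass :: "nat \<Rightarrow> (nat \<Rightarrow> nat \<Rightarrow> nat) \<Rightarrow> (nat \<Rightarrow> nat \<Rightarrow> int) \<Rightarrow> nat \<Rightarrow> int \<Rightarrow> (nat \<times> int) set" where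
  "gclass N A B i k = {(i, k') | k'. same_act N A B i k k'}"

definition GB :: "nat \<Rightarrow> (nat \<Rightarrow> nat \<Rightarrow> nat) \<Rightarrow> (nat \<Rightarrow> nat \<Rightarrow> int) \<Rightarrow> (nat \<times> int) set set" where
  "GB N A B = {gclass N A B i k | i k. i < N}"

definition isotropy :: "nat \<Rightarrow> (nat \<Rightarrow> nat \<Rightarrow> nat) \<Rightarrow> (nat \<Rightarrow> nat \<Rightarrow> int) \<Rightarrow> nat \<Rightarrow> (nat \<times> int) set set" where
  "isotropy N A B i = {gclass N A B i k | k. True}"

definition contracting :: "nat \<Rightarrow> (nat \<Rightarrow> nat \<Rightarrow> nat) \<Rightarrow> (nat \<Rightarrow> nat \<Rightarrow> int) \<Rightarrow> bool" where
  "contracting N A B \<longleftrightarrow> (\<exists>F. F \<subseteq> GB N A B \<and> finite F \<and>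
     (\<forall>i<N. \<forall>k. \<exists>n. \<forall>l\<ge>n. \<forall>\<mu>\<in>paths_from N A i l.
        gclass N A B (res_vertex i \<mu>) (path_res A B k \<mu>) \<in> F))"

definition Vinf :: "nat \<Rightarrow> (nat \<Rightarrow> nat \<Rightarrow> nat) \<Rightarrow> (nat \<Rightarrow> nat \<Rightarrow> int) \<Rightarrow> nat set" where
  "Vinf N A B = {i. i < N \<and> infinite (isotropy N A B i)}"

definition Einf :: "nat \<Rightarrow> (nat \<Rightarrow> nat \<Rightarrow> nat) \<Rightarrow> (nat \<Rightarrow> nat \<Rightarrow> int) \<Rightarrow> edge set" where
  "Einf N A B = {e \<in> edges N A. sc e \<in> Vinf N A B \<and> B (rg e) (sc e) \<noteq> 0}"

definition paths_inf :: "nat \<Rightarrow> (nat \<Rightarrow> nat \<Rightarrow> nat) \<Rightarrow> (nat \<Rightarrow> nat \<Rightarrow> int) \<Rightarrow> nat \<Rightarrow> edge list set" where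
  "paths_inf N A B n = {\<mu>. length \<mu> = n \<and> set \<mu> \<subseteq> Einf N A B \<and> composable \<mu>}"

definition A_path :: "(nat \<Rightarrow> nat \<Rightarrow> nat) \<Rightarrow> edge list \<Rightarrow> nat" where
  "A_path A \<mu> = (\<Prod>e\<leftarrow>\<mu>. A (rg e) (sc e))"

definition B_path :: "(nat \<Rightarrow> nat \<Rightarrow> int) \<Rightarrow> edge list \<Rightarrow> int" where
  "B_path B \<mu> = (\<Prod>e\<leftarrow>\<mu>. B (rg e) (sc e))"

text \<open>max over E^n_{A,\<infinity>} of |B_\<mu>|/A_\<mu>; the maximum over the empty set is taken to be 0.\<close>
definition max_ratio :: "nat \<Rightarrow> (nat \<Rightarrow> nat \<Rightarrow> nat) \<Rightarrow> (nat \<Rightarrow> nat \<Rightarrow> int) \<Rightarrow> nat \<Rightarrow> real" where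
  "max_ratio N A B n = Max (insert 0
     ((\<lambda>\<mu>. real_of_int \<bar>B_path B \<mu>\<bar> / real (A_path A \<mu>)) ` paths_inf N A B n))"

end

theory Submission
  imports Defs
begin


definition shape :: "edge list \<Rightarrow> (nat \<times> nat) list" where
  "shape \<mu> = map (\<lambda>e. (rg e, sc e)) \<mu>"

lemma composable_Cons:
  "composable (e # \<mu>) \<longleftrightarrow> (\<mu> \<noteq> [] \<longrightarrow> sc e = rg (hd \<mu>)) \<and> composable \<mu>"
  unfolding composable_def
proof (intro iffI conjI impI allI)
  assume H: "\<forall>t. Suc t < length (e # \<mu>) \<longrightarrow> sc ((e # \<mu>) ! t) = rg ((e # \<mu>) ! Suc t)"
  { assume "\<mu> \<noteq> []" then show "sc e = rg (hd \<mu>)" using H[rule_format, of 0] by (simp add: hd_conv_nth) }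
  { fix t assume "Suc t < length \<mu>" then show "sc (\<mu> ! t) = rg (\<mu> ! Suc t)" using H[rule_format, of "Suc t"] by simp }
next
  fix t
  assume H: "(\<mu> \<noteq> [] \<longrightarrow> sc e = rg (hd \<mu>)) \<and> (\<forall>t. Suc t < length \<mu> \<longrightarrow> sc (\<mu> ! t) = rg (\<mu> ! Suc t))"
    and t: "Suc t < length (e # \<mu>)"
  show "sc ((e # \<mu>) ! t) = rg ((e # \<mu>) ! Suc t)"
  proof (cases t)
    case 0 then show ?thesis using H t by (simp add: hd_conv_nth)
  next
    case (Suc s) then show ?thesis using H t by simp
  qed
qed

lemma composable_Nil[simp]: "composable []" by (simp add: composable_def)

lemma composable_append:
  "composable (a @ b) \<longleftrightarrow> composable a \<and> composable b \<and> (a \<noteq> [] \<longrightarrow> b \<noteq> [] \<longrightarrow> sc (last a) = rg (hd b))"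
  by (induction a) (auto simp: composable_Cons)

lemma composable_take: "composable \<mu> \<Longrightarrow> composable (take k \<mu>)"
  unfolding composable_def by auto

lemma composable_drop: "composable \<mu> \<Longrightarrow> composable (drop k \<mu>)"
  unfolding composable_def by auto

lemma composable_shape:
  assumes "shape \<mu> = shape \<nu>" shows "composable \<mu> = composable \<nu>"
proof -
  have L: "length \<mu> = length \<nu>" using arg_cong[OF assms, of length] unfolding shape_def by simp
  have "rg (\<mu>!t) = rg (\<nu>!t) \<and> sc (\<mu>!t) = sc (\<nu>!t)" if "t < length \<mu>" for t
    using arg_cong[OF assms, of "\<lambda>l. l!t"] L that unfolding shape_def by simp
  then have "sc (\<mu>!t) = rg (\<mu>!Suc t) \<longleftrightarrow> sc (\<nu>!t) = rg (\<nu>!Suc t)" if "Suc t < length \<mu>" for t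
    using that by (metis Suc_lessD)
  then show ?thesis unfolding composable_def using L by metis
qed

lemma shape_hd_last:
  assumes "shape \<mu> = shape \<nu>" "\<mu> \<noteq> []"
  shows "rg (hd \<mu>) = rg (hd \<nu>)" "sc (last \<mu>) = sc (last \<nu>)" "\<nu> \<noteq> []"
proof -
  show "\<nu> \<noteq> []" using assms unfolding shape_def by auto
  have h: "hd (shape \<mu>) = hd (shape \<nu>)" "last (shape \<mu>) = last (shape \<nu>)" using assms(1) by simp_all
  from h(1) show "rg (hd \<mu>) = rg (hd \<nu>)" using assms \<open>\<nu> \<noteq> []\<close> by (simp add: shape_def hd_map)
  from h(2) show "sc (last \<mu>) = sc (last \<nu>)" using assms \<open>\<nu> \<noteq> []\<close> by (simp add: shape_def last_map)
qed

definition wt :: "(nat \<Rightarrow> nat \<Rightarrow> nat) \<Rightarrow> (nat \<Rightarrow> nat \<Rightarrow> int) \<Rightarrow> edge list \<Rightarrow> real" where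
  "wt A B \<mu> = real_of_int \<bar>B_path B \<mu>\<bar> / real (A_path A \<mu>)"

lemma wt_Nil[simp]: "wt A B [] = 1"
  by (simp add: wt_def A_path_def B_path_def)

lemma wt_Cons: "wt A B (e # \<mu>) = (real_of_int \<bar>B (rg e) (sc e)\<bar> / real (A (rg e) (sc e))) * wt A B \<mu>"
  by (simp add: wt_def A_path_def B_path_def abs_mult)

lemma wt_append: "wt A B (a @ b) = wt A B a * wt A B b"
  by (induction a) (simp_all add: wt_Cons)

lemma wt_nonneg: "wt A B \<mu> \<ge> 0"
  by (simp add: wt_def)

lemma wt_shape: "shape \<mu> = shape \<nu> \<Longrightarrow> wt A B \<mu> = wt A B \<nu>"
proof (induction \<mu> arbitrary: \<nu>)
  case Nil then show ?case by (simp add: shape_def)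
next
  case (Cons e \<mu>)
  then obtain f \<nu>' where nu: "\<nu> = f # \<nu>'" unfolding shape_def by (cases \<nu>) auto
  then have "shape \<mu> = shape \<nu>'" "rg e = rg f" "sc e = sc f" using Cons.prems by (simp_all add: shape_def)
  then show ?case using Cons.IH nu by (simp add: wt_Cons)
qed

lemma edges_mem: "(i,j,m) \<in> edges N A \<longleftrightarrow> i < N \<and> j < N \<and> m < A i j"
  by (simp add: edges_def)

lemma finite_edges: "finite (edges N A)"
proof -
  have "edges N A \<subseteq> (\<Union>i<N. \<Union>j<N. (\<lambda>m. (i,j,m)) ` {..<A i j})"
    by (auto simp: edges_def)
  moreover have "finite (\<Union>i<N. \<Union>j<N. (\<lambda>m. (i,j,m)) ` {..<A i j})"
    by (intro finite_UN_I finite_imageI finite_lessThan)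
  ultimately show ?thesis by (rule finite_subset)
qed

lemma edge_in_bounds: "e \<in> edges N A \<Longrightarrow> rg e < N \<and> sc e < N \<and> A (rg e) (sc e) > 0"
  by (cases e) (auto simp: edges_def rg_def sc_def)



lemma edge_act_rg_sc[simp]: "rg (edge_act A B k e) = rg e" "sc (edge_act A B k e) = sc e"
  by (cases e, simp add: edge_act_def rg_def sc_def)+

lemma shape_path_act[simp]: "shape (path_act A B k \<mu>) = shape \<mu>"
  by (induction \<mu> arbitrary: k) (simp_all add: shape_def)

lemma length_path_act[simp]: "length (path_act A B k \<mu>) = length \<mu>"
  by (induction \<mu> arbitrary: k) simp_all

lemma edge_act_edges: "e \<in> edges N A \<Longrightarrow> edge_act A B k e \<in> edges N A"
proof (cases e)
  case (fields i j m)
  assume "e \<in> edges N A"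
  then have "i < N" "j < N" "m < A i j" using fields by (simp_all add: edges_def)
  then have "nat ((k * B i j + int m) mod int (A i j)) < A i j"
    by (simp add: nat_less_iff)
  then show ?thesis using fields \<open>i<N\<close> \<open>j<N\<close> by (simp add: edges_def edge_act_def)
qed

lemma path_act_edges: "set \<mu> \<subseteq> edges N A \<Longrightarrow> set (path_act A B k \<mu>) \<subseteq> edges N A"
  by (induction \<mu> arbitrary: k) (simp_all add: edge_act_edges)

lemma path_act_paths_from:
  assumes "\<mu> \<in> paths_from N A i n" shows "path_act A B k \<mu> \<in> paths_from N A i n"
proof -
  have s: "shape (path_act A B k \<mu>) = shape \<mu>" by simp
  show ?thesis using assms path_act_edges[of \<mu> N A B k] composable_shape[OF s] shape_hd_last(1)[OF s]
    by (auto simp: paths_from_def)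
qed

lemma edge_act_add:
  assumes "e \<in> edges N A"
  shows "edge_act A B (k1 + k2) e = edge_act A B k1 (edge_act A B k2 e)"
    "edge_res A B (k1 + k2) e = edge_res A B k1 (edge_act A B k2 e) + edge_res A B k2 e"
proof -
  obtain i j m where e: "e = (i,j,m)" by (cases e)
  have pos: "int (A i j) > 0" using assms e by (simp add: edges_def)
  define a where "a = int (A i j)"
  define x where "x = k2 * B i j + int m"
  have a0: "a > 0" using pos a_def by simp
  have nn: "int (nat (x mod a)) = x mod a" using a0 by simp
  have xm0: "0 \<le> x mod a" using a0 by simp
  have e2: "edge_act A B k2 e = (i, j, nat (x mod a))" by (simp add: e edge_act_def x_def a_def)
  have e12: "edge_act A B (k1 + k2) e = (i, j, nat ((k1 * B i j + x) mod a))"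
    by (simp add: e edge_act_def x_def a_def algebra_simps)
  have r12: "edge_res A B (k1 + k2) e = (k1 * B i j + x) div a"
    by (simp add: e edge_res_def x_def a_def algebra_simps)
  have r2: "edge_res A B k2 e = x div a" by (simp add: e edge_res_def x_def a_def)
  have m1: "(k1 * B i j + x mod a) mod a = (k1 * B i j + x) mod a" by (rule mod_add_right_eq)
  have d1: "(k1 * B i j + x) div a = (k1 * B i j + x mod a) div a + x div a"
  proof -
    have "k1 * B i j + x = (k1 * B i j + x mod a) + (x div a) * a" by simp
    moreover have "((k1 * B i j + x mod a) + (x div a) * a) div a = x div a + (k1 * B i j + x mod a) div a"
      using a0 by (intro div_mult_self1) simp
    ultimately show ?thesis by (simp add: add.commute)
  qed
  show "edge_act A B (k1 + k2) e = edge_act A B k1 (edge_act A B k2 e)"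
    unfolding e12 e2 by (simp add: edge_act_def xm0 m1 a_def[symmetric])
  show "edge_res A B (k1 + k2) e = edge_res A B k1 (edge_act A B k2 e) + edge_res A B k2 e"
    unfolding r12 e2 r2 by (simp add: edge_res_def xm0 d1 a_def[symmetric])
qed

lemma path_act_add:
  "set \<mu> \<subseteq> edges N A \<Longrightarrow> path_act A B (k1 + k2) \<mu> = path_act A B k1 (path_act A B k2 \<mu>)"
proof (induction \<mu> arbitrary: k1 k2)
  case Nil then show ?case by simp
next
  case (Cons e \<mu>)
  then have e: "e \<in> edges N A" and s: "set \<mu> \<subseteq> edges N A" by auto
  show ?case using edge_act_add[OF e, of B k1 k2] Cons.IH[OF s] by simp
qed

lemma edge_act_zero: "e \<in> edges N A \<Longrightarrow> edge_act A B 0 e = e \<and> edge_res A B 0 e = 0"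
  by (cases e) (auto simp: edges_def edge_act_def edge_res_def)

lemma path_act_zero: "set \<mu> \<subseteq> edges N A \<Longrightarrow> path_act A B 0 \<mu> = \<mu>"
  by (induction \<mu>) (auto simp: edge_act_zero)

lemma path_res_zero: "set \<mu> \<subseteq> edges N A \<Longrightarrow> path_res A B 0 \<mu> = 0"
  by (induction \<mu>) (auto simp: edge_act_zero)

lemma path_act_append: "path_act A B k (\<mu> @ \<nu>) = path_act A B k \<mu> @ path_act A B (path_res A B k \<mu>) \<nu>"
  by (induction \<mu> arbitrary: k) simp_all

lemma path_res_append: "path_res A B k (\<mu> @ \<nu>) = path_res A B (path_res A B k \<mu>) \<nu>"
  by (induction \<mu> arbitrary: k) simp_all



definition triv :: "nat \<Rightarrow> (nat \<Rightarrow> nat \<Rightarrow> nat) \<Rightarrow> (nat \<Rightarrow> nat \<Rightarrow> int) \<Rightarrow> nat \<Rightarrow> int \<Rightarrow> bool" where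
  "triv N A B j d \<longleftrightarrow> (\<forall>n. \<forall>\<mu>\<in>paths_from N A j n. path_act A B d \<mu> = \<mu>)"

lemma paths_from_edges: "\<mu> \<in> paths_from N A i n \<Longrightarrow> set \<mu> \<subseteq> edges N A"
  by (simp add: paths_from_def)

lemma same_act_refl: "same_act N A B i k k" by (simp add: same_act_def)
lemma same_act_sym: "same_act N A B i k k' \<Longrightarrow> same_act N A B i k' k" by (simp add: same_act_def)
lemma same_act_trans: "same_act N A B i k k' \<Longrightarrow> same_act N A B i k' k'' \<Longrightarrow> same_act N A B i k k''"
  by (simp add: same_act_def)

lemma gclass_eq_iff: "gclass N A B i k = gclass N A B i k' \<longleftrightarrow> same_act N A B i k k'"
proof
  assume "gclass N A B i k = gclass N A B i k'"
  moreover have "(i, k') \<in> gclass N A B i k'" by (simp add: gclass_def same_act_refl)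
  ultimately have "(i, k') \<in> gclass N A B i k" by simp
  then show "same_act N A B i k k'" by (simp add: gclass_def)
next
  assume H: "same_act N A B i k k'"
  show "gclass N A B i k = gclass N A B i k'"
    unfolding gclass_def using H same_act_sym same_act_trans by blast
qed

lemma same_act_iff_triv: "same_act N A B i k k' \<longleftrightarrow> triv N A B i (k' - k)"
proof
  assume H: "same_act N A B i k k'"
  show "triv N A B i (k' - k)" unfolding triv_def
  proof (intro allI ballI)
    fix n \<nu> assume nu: "\<nu> \<in> paths_from N A i n"
    define \<mu> where "\<mu> = path_act A B (-k) \<nu>"
    have mu: "\<mu> \<in> paths_from N A i n" unfolding \<mu>_def by (rule path_act_paths_from[OF nu])
    have E: "set \<nu> \<subseteq> edges N A" using nu by (rule paths_from_edges)
    have "path_act A B (k' - k) \<nu> = path_act A B (k' + (-k)) \<nu>" by simp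
    also have "\<dots> = path_act A B k' \<mu>" unfolding \<mu>_def by (rule path_act_add[OF E])
    also have "\<dots> = path_act A B k \<mu>" using H mu by (simp add: same_act_def)
    also have "\<dots> = path_act A B (k + (-k)) \<nu>" unfolding \<mu>_def by (rule path_act_add[OF E, symmetric])
    also have "\<dots> = \<nu>" using path_act_zero[OF E] by simp
    finally show "path_act A B (k' - k) \<nu> = \<nu>" .
  qed
next
  assume H: "triv N A B i (k' - k)"
  show "same_act N A B i k k'" unfolding same_act_def
  proof (intro allI ballI)
    fix n \<mu> assume mu: "\<mu> \<in> paths_from N A i n"
    have E: "set \<mu> \<subseteq> edges N A" using mu by (rule paths_from_edges)
    have "path_act A B k' \<mu> = path_act A B ((k' - k) + k) \<mu>" by simp
    also have "\<dots> = path_act A B (k' - k) (path_act A B k \<mu>)" by (rule path_act_add[OF E])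
    also have "\<dots> = path_act A B k \<mu>" using H path_act_paths_from[OF mu, of B k] unfolding triv_def by blast
    finally show "path_act A B k \<mu> = path_act A B k' \<mu>" by simp
  qed
qed

lemma triv_add: "triv N A B i d1 \<Longrightarrow> triv N A B i d2 \<Longrightarrow> triv N A B i (d1 + d2)"
  unfolding triv_def
  by (metis path_act_add paths_from_edges path_act_paths_from)

lemma triv_neg: "triv N A B i d \<Longrightarrow> triv N A B i (- d)"
  using same_act_iff_triv[of N A B i d 0] same_act_iff_triv[of N A B i 0 d] same_act_sym by fastforce

lemma triv_zero: "triv N A B i 0"
  unfolding triv_def using paths_from_edges path_act_zero by blast

lemma triv_nat_mult: "triv N A B i d \<Longrightarrow> triv N A B i (int q * d)"
  by (induction q) (simp_all add: triv_zero triv_add distrib_right)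

lemma triv_mult: assumes "triv N A B i d" shows "triv N A B i (z * d)"
proof (cases "z \<ge> 0")
  case True then show ?thesis using triv_nat_mult[OF assms, of "nat z"] by simp
next
  case False then show ?thesis using triv_neg[OF triv_nat_mult[OF assms, of "nat (-z)"]] by simp
qed

lemma gclass_mod: assumes "triv N A B i p" shows "gclass N A B i k = gclass N A B i (k mod p)"
proof -
  have "k mod p - k = (- (k div p)) * p" using div_mult_mod_eq[of k p] by linarith
  then have "triv N A B i (k mod p - k)" using triv_mult[OF assms] by (metis mult.commute)
  then show ?thesis by (simp add: gclass_eq_iff same_act_iff_triv)
qed

lemma finite_iso_period:
  assumes "finite (isotropy N A B i)" shows "\<exists>p>0. triv N A B i p"
proof (rule ccontr)
  assume "\<not> (\<exists>p>0. triv N A B i p)"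
  then have nz: "\<And>d. triv N A B i d \<Longrightarrow> d = 0" using triv_neg by (metis neg_0_less_iff_less linorder_neqE_linordered_idom)
  have "inj (gclass N A B i)"
  proof (rule injI)
    fix k k' assume "gclass N A B i k = gclass N A B i k'"
    then have "triv N A B i (k' - k)" by (simp add: gclass_eq_iff same_act_iff_triv)
    then have "k' - k = 0" by (rule nz)
    then show "k = k'" by simp
  qed
  moreover have "isotropy N A B i = range (gclass N A B i)" by (auto simp: isotropy_def)
  ultimately have "infinite (isotropy N A B i)" using finite_imageD infinite_UNIV_int by metis
  then show False using assms by simp
qed

lemma infinite_iso_inj:
  assumes "infinite (isotropy N A B i)" shows "inj (gclass N A B i)"
proof (rule injI)
  fix k k' assume H: "gclass N A B i k = gclass N A B i k'"
  show "k = k'"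
  proof (rule ccontr)
    assume "k \<noteq> k'"
    define p where "p = \<bar>k' - k\<bar>"
    have p0: "p > 0" using \<open>k \<noteq> k'\<close> by (simp add: p_def)
    have "triv N A B i (k' - k)" using H by (simp add: gclass_eq_iff same_act_iff_triv)
    then have tp: "triv N A B i p" unfolding p_def using triv_neg[of N A B i "k' - k"] by (cases "k' - k \<ge> 0") auto
    have "isotropy N A B i \<subseteq> gclass N A B i ` {0..<p}"
    proof
      fix g assume "g \<in> isotropy N A B i"
      then obtain k0 where "g = gclass N A B i k0" by (auto simp: isotropy_def)
      then have "g = gclass N A B i (k0 mod p)" using gclass_mod[OF tp] by simp
      moreover have "k0 mod p \<in> {0..<p}" using p0 by simp
      ultimately show "g \<in> gclass N A B i ` {0..<p}" by blast
    qed
    then have "finite (isotropy N A B i)" by (rule finite_subset) simp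
    then show False using assms by simp
  qed
qed

lemma res_vertex_Nil[simp]: "res_vertex i [] = i" by (simp add: res_vertex_def)

lemma paths_from_append:
  assumes "\<mu> \<in> paths_from N A i n" "\<nu> \<in> paths_from N A (res_vertex i \<mu>) n'"
  shows "\<mu> @ \<nu> \<in> paths_from N A i (n + n')"
proof -
  have c: "composable (\<mu> @ \<nu>)" using assms
    by (auto simp: paths_from_def composable_append res_vertex_def)
  show ?thesis
  proof (cases "\<mu> = []")
    case True then show ?thesis using assms by (simp add: paths_from_def)
  next
    case False then show ?thesis using assms c by (auto simp: paths_from_def res_vertex_def)
  qed
qed

lemma res_same_act:
  assumes H: "same_act N A B i k k'" and mu: "\<mu> \<in> paths_from N A i n"
  shows "same_act N A B (res_vertex i \<mu>) (path_res A B k \<mu>) (path_res A B k' \<mu>)"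
  unfolding same_act_def
proof (intro allI ballI)
  fix n' \<nu> assume nu: "\<nu> \<in> paths_from N A (res_vertex i \<mu>) n'"
  have "path_act A B k (\<mu> @ \<nu>) = path_act A B k' (\<mu> @ \<nu>)"
    using H paths_from_append[OF mu nu] by (simp add: same_act_def)
  then show "path_act A B (path_res A B k \<mu>) \<nu> = path_act A B (path_res A B k' \<mu>) \<nu>"
    by (simp add: path_act_append)
qed

lemma gclass_res:
  assumes "gclass N A B i k = gclass N A B i k'" "\<mu> \<in> paths_from N A i n"
  shows "gclass N A B (res_vertex i \<mu>) (path_res A B k \<mu>) = gclass N A B (res_vertex i \<mu>) (path_res A B k' \<mu>)"
  using assms res_same_act gclass_eq_iff by metis



definition Pc :: "nat \<Rightarrow> (nat \<Rightarrow> nat \<Rightarrow> nat) \<Rightarrow> (nat \<Rightarrow> nat \<Rightarrow> int) \<Rightarrow> bool" where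
  "Pc N A B \<longleftrightarrow> (\<forall>\<beta>. \<beta> \<in> paths_inf N A B (length \<beta>) \<longrightarrow> \<beta> \<noteq> [] \<longrightarrow> rg (hd \<beta>) = sc (last \<beta>) \<longrightarrow> wt A B \<beta> < 1)"

lemma Einf_edges: "Einf N A B \<subseteq> edges N A" by (auto simp: Einf_def)

lemma finite_paths_inf: "finite (paths_inf N A B n)"
proof -
  have "paths_inf N A B n \<subseteq> {xs. set xs \<subseteq> edges N A \<and> length xs = n}"
    using Einf_edges[of N A B] by (auto simp: paths_inf_def)
  moreover have "finite {xs. set xs \<subseteq> edges N A \<and> length xs = n}"
    by (rule finite_lists_length_eq[OF finite_edges])
  ultimately show ?thesis by (rule finite_subset)
qed

lemma paths_inf_len: "\<mu> \<in> paths_inf N A B n \<Longrightarrow> length \<mu> = n"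
  by (simp add: paths_inf_def)

lemma paths_inf_take: "\<mu> \<in> paths_inf N A B (length \<mu>) \<Longrightarrow> take k \<mu> \<in> paths_inf N A B (length (take k \<mu>))"
  by (auto simp: paths_inf_def composable_take dest: in_set_takeD)

lemma paths_inf_drop: "\<mu> \<in> paths_inf N A B (length \<mu>) \<Longrightarrow> drop k \<mu> \<in> paths_inf N A B (length (drop k \<mu>))"
  by (auto simp: paths_inf_def composable_drop dest: in_set_dropD)

lemma Einf_bounds: "e \<in> Einf N A B \<Longrightarrow> rg e < N"
  using Einf_edges edge_in_bounds by blast

lemma weight_bound:
  assumes P: "Pc N A B"
  shows "\<exists>C \<rho>. C \<ge> 1 \<and> 0 < \<rho> \<and> \<rho> < 1 \<and>
     (\<forall>\<mu>. \<mu> \<in> paths_inf N A B (length \<mu>) \<longrightarrow> wt A B \<mu> \<le> C * \<rho> ^ length \<mu>)"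
proof -
  define PI where "PI = (\<lambda>\<mu>. \<mu> \<in> paths_inf N A B (length \<mu>))"
  define Cl where "Cl = {\<beta>. PI \<beta> \<and> 1 \<le> length \<beta> \<and> length \<beta> \<le> N \<and> rg (hd \<beta>) = sc (last \<beta>)}"
  define S where "S = {\<mu>. PI \<mu> \<and> length \<mu> \<le> N}"
  have finS: "finite S"
  proof -
    have "S \<subseteq> (\<Union>n\<le>N. paths_inf N A B n)" by (auto simp: S_def PI_def)
    then show ?thesis using finite_paths_inf by (meson finite_UN_I finite_atMost finite_subset)
  qed
  have finCl: "finite Cl" using finS by (rule finite_subset[rotated]) (auto simp: S_def Cl_def)
  define \<rho> where "\<rho> = Max (insert (1/2) ((\<lambda>\<beta>. root (length \<beta>) (wt A B \<beta>)) ` Cl))"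
  have rho_ge: "\<rho> \<ge> 1/2" unfolding \<rho>_def using finCl by (intro Max_ge) auto
  have rho_lt: "\<rho> < 1" unfolding \<rho>_def using finCl
  proof (subst Max_less_iff, simp_all, intro ballI)
    fix \<beta> assume b: "\<beta> \<in> Cl"
    then have l1: "1 \<le> length \<beta>" by (simp add: Cl_def)
    then have bn: "\<beta> \<noteq> []" by auto
    have "PI \<beta>" "rg (hd \<beta>) = sc (last \<beta>)" using b by (simp_all add: Cl_def)
    then have "wt A B \<beta> < 1" using P bn unfolding Pc_def PI_def by blast
    note bn this
    then show "root (length \<beta>) (wt A B \<beta>) < 1" by auto
  qed
  have rho0: "\<rho> > 0" using rho_ge by simp
  have cyc: "wt A B \<beta> \<le> \<rho> ^ length \<beta>" if b: "\<beta> \<in> Cl" for \<beta>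
  proof -
    have L1: "1 \<le> length \<beta>" using b by (simp add: Cl_def)
    then have L: "length \<beta> > 0" by linarith
    have "root (length \<beta>) (wt A B \<beta>) \<le> \<rho>" unfolding \<rho>_def using finCl b by (intro Max_ge) auto
    moreover have "root (length \<beta>) (wt A B \<beta>) \<ge> 0" using wt_nonneg[of A B \<beta>] by (rule real_root_ge_zero)
    ultimately have "root (length \<beta>) (wt A B \<beta>) ^ length \<beta> \<le> \<rho> ^ length \<beta>" by (rule power_mono)
    then show ?thesis using L wt_nonneg by simp
  qed
  define C where "C = Max (insert 1 ((\<lambda>\<mu>. wt A B \<mu> / \<rho> ^ length \<mu>) ` S))"
  have C1: "C \<ge> 1" unfolding C_def using finS by (intro Max_ge) auto
  have short: "wt A B \<mu> \<le> C * \<rho> ^ length \<mu>" if "\<mu> \<in> S" for \<mu>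
  proof -
    have "wt A B \<mu> / \<rho> ^ length \<mu> \<le> C" unfolding C_def using finS that by (intro Max_ge) auto
    then show ?thesis using rho0 by (simp add: divide_le_eq mult.commute)
  qed
  have main: "\<forall>\<mu>. PI \<mu> \<and> length \<mu> = n \<longrightarrow> wt A B \<mu> \<le> C * \<rho> ^ n" for n
  proof (induction n rule: less_induct)
    case (less n)
    show ?case
    proof (intro allI impI)
      fix \<mu> assume mu: "PI \<mu> \<and> length \<mu> = n"
      show "wt A B \<mu> \<le> C * \<rho> ^ n"
      proof (cases "n \<le> N")
        case True then show ?thesis using mu short by (auto simp: S_def)
      next
        case False
        have comp: "composable \<mu>" and setE: "set \<mu> \<subseteq> Einf N A B" using mu by (auto simp: PI_def paths_inf_def)
        have "\<not> inj_on (\<lambda>t. rg (\<mu> ! t)) {..N}"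
        proof (rule pigeonhole)
          have "(\<lambda>t. rg (\<mu> ! t)) ` {..N} \<subseteq> {..<N}"
          proof
            fix x assume "x \<in> (\<lambda>t. rg (\<mu> ! t)) ` {..N}"
            then obtain t where t: "t \<le> N" "x = rg (\<mu> ! t)" by auto
            then have "\<mu> ! t \<in> set \<mu>" using False mu by auto
            then show "x \<in> {..<N}" using t setE Einf_bounds[of "\<mu> ! t" N A B] by auto
          qed
          then have "card ((\<lambda>t. rg (\<mu> ! t)) ` {..N}) \<le> N" by (metis card_lessThan card_mono finite_lessThan)
          then show "card ((\<lambda>t. rg (\<mu> ! t)) ` {..N}) < card {..N}" by simp
        qed
        then obtain a b where ab: "a \<le> N" "b \<le> N" "a \<noteq> b" "rg (\<mu> ! a) = rg (\<mu> ! b)"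
          unfolding inj_on_def by auto
        then obtain a b where ab: "a < b" "b \<le> N" "rg (\<mu> ! a) = rg (\<mu> ! b)"
          by (metis linorder_neqE_nat order.strict_trans2 order_less_imp_le)
        have bn: "b < n" using ab False by simp
        have len_mu: "length \<mu> = n" using mu by blast
        define \<alpha> where "\<alpha> = take a \<mu>"
        define \<beta> where "\<beta> = take (b - a) (drop a \<mu>)"
        define \<gamma> where "\<gamma> = drop b \<mu>"
        have dec: "\<mu> = \<alpha> @ \<beta> @ \<gamma>"
        proof -
          have "take b \<mu> = \<alpha> @ \<beta>" unfolding \<alpha>_def \<beta>_def using take_add[of a "b - a" \<mu>] ab by simp
          then show ?thesis unfolding \<gamma>_def by (metis append.assoc append_take_drop_id)
        qed
        have len_b: "length \<beta> = b - a" using bn ab mu unfolding \<beta>_def by simp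
        have len_a: "length \<alpha> = a" using bn ab mu unfolding \<alpha>_def by simp
        have len_g: "length \<gamma> = n - b" using mu unfolding \<gamma>_def by simp
        have bne: "\<beta> \<noteq> []" using len_b ab by auto
        have gne: "\<gamma> \<noteq> []" using len_g bn by auto
        have hdb: "hd \<beta> = \<mu> ! a" unfolding \<beta>_def using ab bn mu by (simp add: hd_drop_conv_nth hd_take)
        have lastb: "last \<beta> = \<mu> ! (b - 1)" unfolding \<beta>_def using ab bn mu
          by (simp add: last_conv_nth)
        have hdg: "hd \<gamma> = \<mu> ! b" unfolding \<gamma>_def using bn mu by (simp add: hd_drop_conv_nth)
        have scb: "sc (\<mu> ! (b - 1)) = rg (\<mu> ! b)" using comp ab bn mu unfolding composable_def
          by (metis One_nat_def Suc_pred gr_zeroI less_nat_zero_code)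
        have mu': "\<mu> \<in> paths_inf N A B (length \<mu>)" using mu unfolding PI_def by blast
        have PIb: "PI \<beta>" unfolding \<beta>_def PI_def
          by (intro paths_inf_take paths_inf_drop mu')
        have closed: "rg (hd \<beta>) = sc (last \<beta>)" using hdb lastb scb ab by simp
        have bCl: "\<beta> \<in> Cl" unfolding Cl_def using PIb closed len_b ab by auto
        have PIa: "PI \<alpha>" unfolding \<alpha>_def PI_def by (intro paths_inf_take mu')
        have PIg: "PI \<gamma>" unfolding \<gamma>_def PI_def by (intro paths_inf_drop mu')
        have junc: "sc (last \<alpha>) = rg (hd \<gamma>)" if "\<alpha> \<noteq> []"
        proof -
          have a0: "a > 0" using that len_a by auto
          have "last \<alpha> = \<alpha> ! (length \<alpha> - 1)" using that by (rule last_conv_nth)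
          also have "\<dots> = \<mu> ! (a - 1)" unfolding \<alpha>_def using a0 ab bn len_mu by simp
          finally have "last \<alpha> = \<mu> ! (a - 1)" .
          moreover have "sc (\<mu> ! (a - 1)) = rg (\<mu> ! a)" using comp a0 ab bn mu unfolding composable_def
            by (metis One_nat_def Suc_pred less_trans)
          ultimately show ?thesis using hdg ab by simp
        qed
        have PIag: "PI (\<alpha> @ \<gamma>)" using PIa PIg junc gne
          by (auto simp: PI_def paths_inf_def composable_append)
        have len_ag: "length (\<alpha> @ \<gamma>) < n" using len_a len_g ab bn by simp
        have IH: "wt A B (\<alpha> @ \<gamma>) \<le> C * \<rho> ^ length (\<alpha> @ \<gamma>)"
          using less.IH[OF len_ag] PIag by blast
        have wdec: "wt A B \<mu> = wt A B (\<alpha> @ \<gamma>) * wt A B \<beta>"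
          using dec by (simp add: wt_append)
        have "wt A B \<mu> \<le> (C * \<rho> ^ length (\<alpha> @ \<gamma>)) * \<rho> ^ length \<beta>"
          unfolding wdec using IH cyc[OF bCl] C1 rho0 by (intro mult_mono) (simp_all add: wt_nonneg)
        also have "\<dots> = C * \<rho> ^ n"
        proof -
          have "length (\<alpha> @ \<gamma>) + length \<beta> = n" using len_a len_g len_b ab bn by simp
          then show ?thesis by (metis mult.assoc power_add)
        qed
        finally show ?thesis .
      qed
    qed
  qed
  show ?thesis using C1 rho0 rho_lt main unfolding PI_def by blast
qed



definition pw :: "edge list \<Rightarrow> nat \<Rightarrow> edge list" where
  "pw \<beta> q = concat (replicate q \<beta>)"

lemma pw_0[simp]: "pw \<beta> 0 = []" by (simp add: pw_def)

lemma pw_Suc: "pw \<beta> (Suc q) = pw \<beta> q @ \<beta>"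
proof -
  have "concat (replicate q \<beta>) @ \<beta> = \<beta> @ concat (replicate q \<beta>)"
    by (induction q) simp_all
  then show ?thesis by (simp add: pw_def)
qed

lemma pw_len: "length (pw \<beta> q) = q * length \<beta>"
  by (induction q) (simp_all add: pw_Suc)

lemma pw_set: "set (pw \<beta> q) \<subseteq> set \<beta>"
  by (induction q) (auto simp: pw_Suc)

lemma pw_wt: "wt A B (pw \<beta> q) = wt A B \<beta> ^ q"
  by (induction q) (simp_all add: pw_Suc wt_append)

lemma pw_props:
  assumes "\<beta> \<noteq> []" "composable \<beta>" "rg (hd \<beta>) = sc (last \<beta>)"
  shows "composable (pw \<beta> q) \<and> (q > 0 \<longrightarrow> pw \<beta> q \<noteq> [] \<and> rg (hd (pw \<beta> q)) = rg (hd \<beta>) \<and> sc (last (pw \<beta> q)) = sc (last \<beta>))"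
proof (induction q)
  case 0 then show ?case by simp
next
  case (Suc q)
  show ?case
  proof (cases q)
    case 0 then show ?thesis using assms by (simp add: pw_Suc)
  next
    case (Suc q')
    then have h: "pw \<beta> q \<noteq> []" "rg (hd (pw \<beta> q)) = rg (hd \<beta>)" "sc (last (pw \<beta> q)) = sc (last \<beta>)" "composable (pw \<beta> q)"
      using Suc.IH by auto
    then show ?thesis using assms by (simp add: pw_Suc composable_append)
  qed
qed

lemma max_ratio_ge:
  assumes "\<mu> \<in> paths_inf N A B n" shows "wt A B \<mu> \<le> max_ratio N A B n"
  unfolding max_ratio_def using assms finite_paths_inf[of N A B n]
  by (intro Max_ge) (auto simp: wt_def)

lemma max_ratio_le:
  assumes "\<And>\<mu>. \<mu> \<in> paths_inf N A B n \<Longrightarrow> wt A B \<mu> \<le> x" "0 \<le> x"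
  shows "max_ratio N A B n \<le> x"
  unfolding max_ratio_def using assms finite_paths_inf[of N A B n]
  by (subst Max_le_iff) (auto simp: wt_def)

lemma notPc_limsup:
  assumes "\<not> Pc N A B"
  shows "limsup (\<lambda>n. ereal (root n (max_ratio N A B n))) \<ge> 1"
proof -
  obtain \<beta> where b: "\<beta> \<in> paths_inf N A B (length \<beta>)" "\<beta> \<noteq> []" "rg (hd \<beta>) = sc (last \<beta>)" "wt A B \<beta> \<ge> 1"
    using assms unfolding Pc_def by (auto simp: not_less)
  define L where "L = length \<beta>"
  have L0: "L > 0" using b(2) by (simp add: L_def)
  have comp: "composable \<beta>" using b(1) by (simp add: paths_inf_def)
  define X where "X = (\<lambda>n. ereal (root n (max_ratio N A B n)))"
  define r where "r = (\<lambda>q. Suc q * L)"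
  have sm: "strict_mono r" unfolding r_def using L0 by (intro strict_monoI) simp
  have ge: "1 \<le> (X \<circ> r) q" for q
  proof -
    have inP: "pw \<beta> (Suc q) \<in> paths_inf N A B (r q)"
      using pw_props[OF b(2) comp b(3), of "Suc q"] pw_set[of \<beta> "Suc q"] b(1)
      by (auto simp: paths_inf_def pw_len r_def L_def)
    have "1 \<le> wt A B \<beta> ^ Suc q" using b(4) by (rule one_le_power)
    also have "\<dots> \<le> max_ratio N A B (r q)" using max_ratio_ge[OF inP] by (simp add: pw_wt)
    finally have "1 \<le> max_ratio N A B (r q)" .
    moreover have "r q > 0" using L0 by (simp add: r_def)
    ultimately show ?thesis by (simp add: X_def)
  qed
  have "1 \<le> limsup (X \<circ> r)"
    by (rule le_Limsup) (simp_all add: ge[unfolded comp_def] always_eventually)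
  also have "\<dots> \<le> limsup X" by (rule limsup_subseq_mono[OF sm])
  finally show ?thesis by (simp add: X_def)
qed

lemma Pc_limsup:
  assumes "Pc N A B"
  shows "limsup (\<lambda>n. ereal (root n (max_ratio N A B n))) < 1"
proof -
  obtain C \<rho> where C: "C \<ge> 1" "0 < \<rho>" "\<rho> < 1"
    "\<And>\<mu>. \<mu> \<in> paths_inf N A B (length \<mu>) \<Longrightarrow> wt A B \<mu> \<le> C * \<rho> ^ length \<mu>"
    using weight_bound[OF assms] by blast
  have mr: "max_ratio N A B n \<le> C * \<rho> ^ n" for n
  proof (rule max_ratio_le)
    fix \<mu> assume "\<mu> \<in> paths_inf N A B n"
    then show "wt A B \<mu> \<le> C * \<rho> ^ n" using C(4)[of \<mu>] paths_inf_len[of \<mu>] by auto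
  next
    show "0 \<le> C * \<rho> ^ n" using C by simp
  qed
  have ev: "eventually (\<lambda>n. ereal (root n (max_ratio N A B n)) \<le> ereal (root n C * \<rho>)) sequentially"
  proof (rule eventually_sequentiallyI[of 1])
    fix n :: nat assume n: "1 \<le> n"
    have "root n (max_ratio N A B n) \<le> root n (C * \<rho> ^ n)"
      using mr[of n] n by (subst real_root_le_iff) auto
    also have "\<dots> = root n C * \<rho>"
      using n C by (simp add: real_root_mult real_root_power_cancel)
    finally show "ereal (root n (max_ratio N A B n)) \<le> ereal (root n C * \<rho>)" by simp
  qed
  have lim: "(\<lambda>n. ereal (root n C * \<rho>)) \<longlonglongrightarrow> ereal (1 * \<rho>)"
    using LIMSEQ_root_const[of C] C by (intro tendsto_intros lim_ereal[THEN iffD2]) auto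
  have "limsup (\<lambda>n. ereal (root n (max_ratio N A B n))) \<le> limsup (\<lambda>n. ereal (root n C * \<rho>))"
    by (rule Limsup_mono[OF ev])
  also have "\<dots> = ereal \<rho>" using lim_imp_Limsup[OF trivial_limit_sequentially lim] by simp
  also have "\<dots> < 1" using C by simp
  finally show ?thesis .
qed



lemma edge_grow:
  assumes a0: "(a::int) > 0"
  shows "\<exists>m'. 0 \<le> m' \<and> m' < a \<and> \<bar>k * b\<bar> \<le> \<bar>(k * b + m') div a\<bar> * a"
proof (cases "k * b \<ge> 0")
  case True
  define m' where "m' = (- (k * b)) mod a"
  define x where "x = k * b + m'"
  have m0: "0 \<le> m'" "m' < a" using a0 by (simp_all add: m'_def)
  have "x mod a = (k * b + - (k * b)) mod a" unfolding x_def m'_def by (rule mod_add_right_eq)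
  then have xm: "x mod a = 0" by simp
  have xa: "x div a * a = x" using div_mult_mod_eq[of x a] xm by simp
  have "x \<ge> k * b" using m0 by (simp add: x_def)
  then have "\<bar>k * b\<bar> \<le> \<bar>x div a\<bar> * a" using True xa a0
    by (metis abs_of_nonneg dual_order.trans mult_nonneg_nonneg abs_ge_self abs_mult abs_of_pos)
  then show ?thesis using m0 unfolding x_def by blast
next
  case False
  have "(k * b) mod a \<ge> 0" using a0 by simp
  then have le: "(k * b) div a * a \<le> k * b" using div_mult_mod_eq[of "k * b" a] by linarith
  then have "(k * b) div a * a < 0" using False by simp
  then have neg: "(k * b) div a < 0" using a0 by (simp add: mult_less_0_iff)
  have "\<bar>k * b\<bar> \<le> \<bar>(k * b) div a\<bar> * a" using le neg False by simp
  then show ?thesis using a0 by (intro exI[of _ 0]) simp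
qed

lemma path_grow:
  assumes "set \<beta> \<subseteq> edges N A"
  shows "\<exists>\<mu>. shape \<mu> = shape \<beta> \<and> set \<mu> \<subseteq> edges N A \<and>
     real_of_int \<bar>k\<bar> * wt A B \<beta> \<le> real_of_int \<bar>path_res A B k \<mu>\<bar>"
  using assms
proof (induction \<beta> arbitrary: k)
  case Nil then show ?case by (intro exI[of _ "[]"]) simp
next
  case (Cons e \<beta>)
  obtain i j m where e: "e = (i,j,m)" by (cases e)
  have ein: "e \<in> edges N A" and sb: "set \<beta> \<subseteq> edges N A" using Cons.prems by auto
  have ij: "i < N" "j < N" "m < A i j" using ein e by (simp_all add: edges_def)
  define a where "a = int (A i j)"
  have a0: "a > 0" using ij a_def by simp
  obtain m' where m': "0 \<le> m'" "m' < a" "\<bar>k * B i j\<bar> \<le> \<bar>(k * B i j + m') div a\<bar> * a"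
    using edge_grow[OF a0] by blast
  define e' where "e' = (i, j, nat m')"
  have e'in: "e' \<in> edges N A" using ij m' a_def by (simp add: e'_def edges_def)
  define r where "r = edge_res A B k e'"
  have r: "r = (k * B i j + m') div a" using m' by (simp add: r_def e'_def edge_res_def a_def)
  obtain \<mu> where mu: "shape \<mu> = shape \<beta>" "set \<mu> \<subseteq> edges N A"
      "real_of_int \<bar>r\<bar> * wt A B \<beta> \<le> real_of_int \<bar>path_res A B r \<mu>\<bar>"
    using Cons.IH[OF sb, of r] by blast
  have "real_of_int \<bar>k\<bar> * (real_of_int \<bar>B i j\<bar> / real (A i j)) \<le> real_of_int \<bar>r\<bar>"
  proof -
    have "real_of_int \<bar>k * B i j\<bar> \<le> real_of_int \<bar>r\<bar> * real_of_int a" using m'(3) r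
      by (metis of_int_le_iff of_int_mult)
    then show ?thesis using a0 by (simp add: a_def abs_mult pos_divide_le_eq mult.assoc)
  qed
  then have X: "(real_of_int \<bar>k\<bar> * (real_of_int \<bar>B i j\<bar> / real (A i j))) * wt A B \<beta> \<le> real_of_int \<bar>r\<bar> * wt A B \<beta>"
    using wt_nonneg[of A B \<beta>] by (rule mult_right_mono)
  have "real_of_int \<bar>k\<bar> * wt A B (e # \<beta>) = (real_of_int \<bar>k\<bar> * (real_of_int \<bar>B i j\<bar> / real (A i j))) * wt A B \<beta>"
    by (simp add: wt_Cons e rg_def sc_def)
  with X have "real_of_int \<bar>k\<bar> * wt A B (e # \<beta>) \<le> real_of_int \<bar>r\<bar> * wt A B \<beta>" by simp
  also have "\<dots> \<le> real_of_int \<bar>path_res A B r \<mu>\<bar>" by (rule mu(3))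
  finally have "real_of_int \<bar>k\<bar> * wt A B (e # \<beta>) \<le> real_of_int \<bar>path_res A B k (e' # \<mu>)\<bar>"
    by (simp add: r_def)
  moreover have "shape (e' # \<mu>) = shape (e # \<beta>)" using mu(1) by (simp add: shape_def e e'_def rg_def sc_def)
  moreover have "set (e' # \<mu>) \<subseteq> edges N A" using e'in mu(2) by simp
  ultimately show ?case by blast
qed

lemma notPc_notcontr:
  assumes "\<not> Pc N A B"
  shows "\<not> contracting N A B"
proof
  assume "contracting N A B"
  then obtain F where F: "F \<subseteq> GB N A B" "finite F"
    "\<And>i k. i < N \<Longrightarrow> \<exists>n. \<forall>l\<ge>n. \<forall>\<mu>\<in>paths_from N A i l.
        gclass N A B (res_vertex i \<mu>) (path_res A B k \<mu>) \<in> F"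
    unfolding contracting_def by blast
  obtain \<beta> where b: "\<beta> \<in> paths_inf N A B (length \<beta>)" "\<beta> \<noteq> []" "rg (hd \<beta>) = sc (last \<beta>)" "wt A B \<beta> \<ge> 1"
    using assms unfolding Pc_def by (auto simp: not_less)
  have comp: "composable \<beta>" and sE: "set \<beta> \<subseteq> Einf N A B" using b(1) by (auto simp: paths_inf_def)
  define j where "j = rg (hd \<beta>)"
  have "last \<beta> \<in> Einf N A B" using sE b(2) by auto
  then have jV: "j \<in> Vinf N A B" using b(3) by (simp add: j_def Einf_def)
  then have jN: "j < N" and jinf: "infinite (isotropy N A B j)" by (auto simp: Vinf_def)
  have inj: "inj (gclass N A B j)" by (rule infinite_iso_inj[OF jinf])
  define S where "S = gclass N A B j -` F"
  have finS: "finite S" unfolding S_def using F(2) inj by (rule finite_vimageI)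
  define K where "K = Max (insert 0 (abs ` S)) + 1"
  have Kbig: "\<bar>x\<bar> < K" if "x \<in> S" for x
  proof -
    have "\<bar>x\<bar> \<le> Max (insert 0 (abs ` S))" using finS that by (intro Max_ge) auto
    then show ?thesis by (simp add: K_def)
  qed
  have K0: "K > 0"
  proof -
    have "0 \<le> Max (insert 0 (abs ` S))" using finS by (intro Max_ge) auto
    then show ?thesis by (simp add: K_def)
  qed
  obtain n where n: "\<forall>l\<ge>n. \<forall>\<mu>\<in>paths_from N A j l.
        gclass N A B (res_vertex j \<mu>) (path_res A B K \<mu>) \<in> F"
    using F(3)[OF jN] by blast
  define \<gamma> where "\<gamma> = pw \<beta> n"
  have gp: "composable \<gamma> \<and> (n > 0 \<longrightarrow> \<gamma> \<noteq> [] \<and> rg (hd \<gamma>) = rg (hd \<beta>) \<and> sc (last \<gamma>) = sc (last \<beta>))"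
    unfolding \<gamma>_def by (rule pw_props[OF b(2) comp b(3)])
  have gE: "set \<gamma> \<subseteq> edges N A" using pw_set[of \<beta> n] sE Einf_edges[of N A B] by (auto simp: \<gamma>_def)
  obtain \<mu> where mu: "shape \<mu> = shape \<gamma>" "set \<mu> \<subseteq> edges N A"
      "real_of_int \<bar>K\<bar> * wt A B \<gamma> \<le> real_of_int \<bar>path_res A B K \<mu>\<bar>"
    using path_grow[OF gE, where k=K and B=B] by blast
  have lenmu: "length \<mu> = n * length \<beta>" using arg_cong[OF mu(1), of length]
    by (simp add: shape_def \<gamma>_def pw_len)
  have mu_from: "\<mu> \<in> paths_from N A j (n * length \<beta>)"
  proof (cases "\<mu> = []")
    case True then show ?thesis using lenmu by (simp add: paths_from_def)
  next
    case False
    have "\<gamma> \<noteq> []" using shape_hd_last(3)[OF mu(1) False] .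
    then have "n > 0" unfolding \<gamma>_def by (metis gr0I pw_0)
    then have "rg (hd \<gamma>) = j" using gp by (simp add: j_def)
    then show ?thesis using False lenmu mu composable_shape[OF mu(1)] gp shape_hd_last(1)[OF mu(1) False]
      by (simp add: paths_from_def)
  qed
  have rv: "res_vertex j \<mu> = j"
  proof (cases "\<mu> = []")
    case True then show ?thesis by simp
  next
    case False
    have "\<gamma> \<noteq> []" using shape_hd_last(3)[OF mu(1) False] .
    then have "n > 0" unfolding \<gamma>_def by (metis gr0I pw_0)
    then show ?thesis using False gp shape_hd_last(2)[OF mu(1) False] b(3)
      by (simp add: res_vertex_def j_def)
  qed
  have "length \<beta> \<ge> 1" using b(2) by (cases \<beta>) auto
  then have "n \<le> n * length \<beta>" by simp
  then have "gclass N A B j (path_res A B K \<mu>) \<in> F" using n mu_from rv by metis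
  then have inS: "path_res A B K \<mu> \<in> S" by (simp add: S_def)
  have "wt A B \<gamma> \<ge> 1" using b(4) by (simp add: \<gamma>_def pw_wt one_le_power)
  then have "real_of_int \<bar>K\<bar> \<le> real_of_int \<bar>K\<bar> * wt A B \<gamma>" by (simp add: mult_le_cancel_left1)
  also have "\<dots> \<le> real_of_int \<bar>path_res A B K \<mu>\<bar>" by (rule mu(3))
  finally have "\<bar>K\<bar> \<le> \<bar>path_res A B K \<mu>\<bar>" by linarith
  then show False using Kbig[OF inS] K0 by simp
qed



fun tailsum :: "(nat \<Rightarrow> nat \<Rightarrow> nat) \<Rightarrow> (nat \<Rightarrow> nat \<Rightarrow> int) \<Rightarrow> edge list \<Rightarrow> real" where
  "tailsum A B [] = 0"
| "tailsum A B (e # \<mu>) = wt A B \<mu> + tailsum A B \<mu>"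

lemma edge_res_bound:
  assumes "e \<in> edges N A"
  shows "real_of_int \<bar>edge_res A B k e\<bar> \<le> real_of_int \<bar>k\<bar> * (real_of_int \<bar>B (rg e) (sc e)\<bar> / real (A (rg e) (sc e))) + 1"
proof -
  obtain i j m where e: "e = (i,j,m)" by (cases e)
  define a where "a = int (A i j)"
  have m: "m < A i j" using assms e by (simp add: edges_def)
  then have a0: "a > 0" by (simp add: a_def)
  define x where "x = k * B i j + int m"
  define r where "r = x div a"
  have rr: "edge_res A B k (i,j,m) = r" by (simp add: edge_res_def r_def x_def a_def)
  have d: "r * a + x mod a = x" using div_mult_mod_eq[of x a] by (simp add: r_def)
  have mm: "0 \<le> x mod a" "x mod a < a" using a0 by simp_all
  have ma: "int m < a" using m by (simp add: a_def)
  have i1: "r * a < \<bar>k * B i j\<bar> + a" using d mm ma unfolding x_def by linarith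
  have i2: "- (r * a) < \<bar>k * B i j\<bar> + a" using d mm ma unfolding x_def by linarith
  have "\<bar>r\<bar> * a \<le> \<bar>k * B i j\<bar> + a" using i1 i2 a0 by (cases "r \<ge> 0") (simp_all add: abs_if)
  then have "real_of_int \<bar>r\<bar> * real_of_int a \<le> real_of_int \<bar>k\<bar> * real_of_int \<bar>B i j\<bar> + real_of_int a"
    by (metis abs_mult of_int_add of_int_le_iff of_int_mult)
  then have "real_of_int \<bar>r\<bar> \<le> (real_of_int \<bar>k\<bar> * real_of_int \<bar>B i j\<bar> + real_of_int a) / real_of_int a"
    using a0 by (simp add: pos_le_divide_eq)
  also have "\<dots> = real_of_int \<bar>k\<bar> * (real_of_int \<bar>B i j\<bar> / real_of_int a) + 1"
    using a0 by (simp add: field_simps)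
  finally show ?thesis by (simp add: rr e rg_def sc_def a_def)
qed

lemma res_bound:
  "set \<mu> \<subseteq> edges N A \<Longrightarrow> real_of_int \<bar>path_res A B k \<mu>\<bar> \<le> real_of_int \<bar>k\<bar> * wt A B \<mu> + tailsum A B \<mu>"
proof (induction \<mu> arbitrary: k)
  case Nil then show ?case by simp
next
  case (Cons e \<mu>)
  define k' where "k' = edge_res A B k e"
  have ein: "e \<in> edges N A" and sb: "set \<mu> \<subseteq> edges N A" using Cons.prems by auto
  define w where "w = real_of_int \<bar>B (rg e) (sc e)\<bar> / real (A (rg e) (sc e))"
  have kb: "real_of_int \<bar>k'\<bar> \<le> real_of_int \<bar>k\<bar> * w + 1" unfolding k'_def w_def by (rule edge_res_bound[OF ein])
  have "real_of_int \<bar>path_res A B k (e # \<mu>)\<bar> = real_of_int \<bar>path_res A B k' \<mu>\<bar>" by (simp add: k'_def)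
  also have "\<dots> \<le> real_of_int \<bar>k'\<bar> * wt A B \<mu> + tailsum A B \<mu>" by (rule Cons.IH[OF sb])
  also have "\<dots> \<le> (real_of_int \<bar>k\<bar> * w + 1) * wt A B \<mu> + tailsum A B \<mu>"
    using kb wt_nonneg[of A B \<mu>] by (simp add: mult_right_mono)
  also have "\<dots> = real_of_int \<bar>k\<bar> * wt A B (e # \<mu>) + tailsum A B (e # \<mu>)"
    by (simp add: wt_Cons w_def algebra_simps)
  finally show ?case .
qed

lemma tailsum_bound:
  assumes wb: "\<And>\<mu>. \<mu> \<in> paths_inf N A B (length \<mu>) \<Longrightarrow> wt A B \<mu> \<le> C * \<rho> ^ length \<mu>"
    and C: "C \<ge> 0" and r: "0 < \<rho>" "\<rho> < 1"
  shows "\<mu> \<in> paths_inf N A B (length \<mu>) \<Longrightarrow> tailsum A B \<mu> \<le> C / (1 - \<rho>)"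
proof -
  have "\<mu> \<in> paths_inf N A B (length \<mu>) \<Longrightarrow> tailsum A B \<mu> \<le> C * (\<Sum>s<length \<mu>. \<rho> ^ s)" for \<mu>
  proof (induction \<mu>)
    case Nil then show ?case by simp
  next
    case (Cons e \<mu>)
    have mu: "\<mu> \<in> paths_inf N A B (length \<mu>)" using Cons.prems
      by (auto simp: paths_inf_def composable_Cons)
    have "tailsum A B (e # \<mu>) = wt A B \<mu> + tailsum A B \<mu>" by simp
    also have "\<dots> \<le> C * \<rho> ^ length \<mu> + C * (\<Sum>s<length \<mu>. \<rho> ^ s)"
      using wb[OF mu] Cons.IH[OF mu] by simp
    also have "\<dots> = C * (\<Sum>s<length (e # \<mu>). \<rho> ^ s)" by (simp add: algebra_simps)
    finally show ?case .
  qed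
  moreover have "C * (\<Sum>s<n. \<rho> ^ s) \<le> C / (1 - \<rho>)" for n
  proof -
    have "(\<Sum>s<n. \<rho> ^ s) = (1 - \<rho> ^ n) / (1 - \<rho>)" using r by (simp add: sum_gp_strict)
    also have "\<dots> \<le> 1 / (1 - \<rho>)" using r by (simp add: divide_right_mono)
    finally show ?thesis using C by (metis mult_left_mono times_divide_eq_right mult_1_right)
  qed
  ultimately show "\<mu> \<in> paths_inf N A B (length \<mu>) \<Longrightarrow> tailsum A B \<mu> \<le> C / (1 - \<rho>)"
    by (meson order_trans)
qed



lemma paths_from_Cons:
  assumes "e # \<mu> \<in> paths_from N A i n"
  shows "e \<in> edges N A" "rg e = i" "\<mu> \<in> paths_from N A (sc e) (length \<mu>)"
    "res_vertex i (e # \<mu>) = res_vertex (sc e) \<mu>"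
  using assms by (auto simp: paths_from_def composable_Cons res_vertex_def)

lemma res_vertex_bound:
  assumes "\<mu> \<in> paths_from N A i n" "i < N" shows "res_vertex i \<mu> < N"
proof (cases "\<mu> = []")
  case True then show ?thesis using assms by simp
next
  case False
  then have "last \<mu> \<in> edges N A" using assms by (auto simp: paths_from_def)
  then show ?thesis using False edge_in_bounds by (simp add: res_vertex_def)
qed

lemma contr_claim:
  assumes wb: "\<And>\<mu>. \<mu> \<in> paths_inf N A B (length \<mu>) \<Longrightarrow> wt A B \<mu> \<le> C * \<rho> ^ length \<mu>"
    and C: "C \<ge> 1" and r: "0 < \<rho>" "\<rho> < 1"
    and per: "\<And>j. j < N \<Longrightarrow> j \<notin> Vinf N A B \<Longrightarrow> per j > 0 \<and> triv N A B j (per j) \<and> real_of_int (per j) \<le> P0"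
    and Cb: "P0 * C + C / (1 - \<rho>) \<le> Cb" and P0: "P0 \<ge> 0"
  shows "\<mu> \<in> paths_from N A i (length \<mu>) \<Longrightarrow> \<exists>kt.
     gclass N A B (res_vertex i \<mu>) (path_res A B k \<mu>) = gclass N A B (res_vertex i \<mu>) kt \<and>
     (real_of_int \<bar>kt\<bar> \<le> Cb \<or> (set \<mu> \<subseteq> Einf N A B \<and> real_of_int \<bar>kt\<bar> \<le> real_of_int \<bar>k\<bar> * wt A B \<mu> + tailsum A B \<mu>))"
proof (induction \<mu> arbitrary: i k)
  case Nil then show ?case by auto
next
  case (Cons e \<mu>)
  note pf = paths_from_Cons[OF Cons.prems]
  define j where "j = sc e"
  define k' where "k' = edge_res A B k e"
  have mu: "\<mu> \<in> paths_from N A j (length \<mu>)" using pf by (simp add: j_def)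
  have rv: "res_vertex i (e # \<mu>) = res_vertex j \<mu>" using pf by (simp add: j_def)
  have pr: "path_res A B k (e # \<mu>) = path_res A B k' \<mu>" by (simp add: k'_def)
  have jN: "j < N" using edge_in_bounds[OF pf(1)] by (simp add: j_def)
  have tsb: "tailsum A B \<mu> \<le> C / (1 - \<rho>)" if "\<mu> \<in> paths_inf N A B (length \<mu>)"
    using tailsum_bound[OF wb _ r that] C by simp
  show ?case
  proof (cases "j \<in> Vinf N A B")
    case False
    define k'' where "k'' = k' mod per j"
    have pj: "per j > 0" "triv N A B j (per j)" "real_of_int (per j) \<le> P0" using per[OF jN False] by auto
    have geq: "gclass N A B j k' = gclass N A B j k''" unfolding k''_def by (rule gclass_mod[OF pj(2)])
    have g1: "gclass N A B (res_vertex j \<mu>) (path_res A B k' \<mu>) = gclass N A B (res_vertex j \<mu>) (path_res A B k'' \<mu>)"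
      by (rule gclass_res[OF geq mu])
    obtain kt where kt: "gclass N A B (res_vertex j \<mu>) (path_res A B k'' \<mu>) = gclass N A B (res_vertex j \<mu>) kt"
      "real_of_int \<bar>kt\<bar> \<le> Cb \<or> (set \<mu> \<subseteq> Einf N A B \<and> real_of_int \<bar>kt\<bar> \<le> real_of_int \<bar>k''\<bar> * wt A B \<mu> + tailsum A B \<mu>)"
      using Cons.IH[OF mu, of k''] by blast
    have "real_of_int \<bar>kt\<bar> \<le> Cb"
    proof (cases "real_of_int \<bar>kt\<bar> \<le> Cb")
      case False
      then have sE: "set \<mu> \<subseteq> Einf N A B" and kb: "real_of_int \<bar>kt\<bar> \<le> real_of_int \<bar>k''\<bar> * wt A B \<mu> + tailsum A B \<mu>"
        using kt(2) by auto
      have PI: "\<mu> \<in> paths_inf N A B (length \<mu>)" using sE mu by (simp add: paths_inf_def paths_from_def)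
      have k''b: "real_of_int \<bar>k''\<bar> \<le> P0"
      proof -
        have "0 \<le> k''" "k'' < per j" using pj(1) by (simp_all add: k''_def)
        then show ?thesis using pj(3) by linarith
      qed
      have w1: "wt A B \<mu> \<le> C"
      proof -
        have "\<rho> ^ length \<mu> \<le> 1" using r by (simp add: power_le_one)
        then have "C * \<rho> ^ length \<mu> \<le> C" using C by (simp add: mult_le_cancel_left1)
        then show ?thesis using wb[OF PI] by simp
      qed
      have "real_of_int \<bar>k''\<bar> * wt A B \<mu> \<le> P0 * C"
        using k''b w1 wt_nonneg[of A B \<mu>] P0 by (intro mult_mono) simp_all
      then show ?thesis using kb tsb[OF PI] Cb by linarith
    qed simp
    then show ?thesis using g1 kt(1) rv pr by auto
  next
    case True
    show ?thesis
    proof (cases "B (rg e) (sc e) = 0")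
      case True
      obtain i0 j0 m0 where e: "e = (i0, j0, m0)" by (cases e)
      have "m0 < A i0 j0" using pf(1) e by (simp add: edges_def)
      then have "k' = 0" using True by (simp add: k'_def e edge_res_def rg_def sc_def)
      moreover have "set \<mu> \<subseteq> edges N A" using mu by (simp add: paths_from_def)
      ultimately have "path_res A B k' \<mu> = 0" using path_res_zero[of \<mu> N A B] by simp
      then show ?thesis using rv pr Cb C r P0
        by (intro exI[of _ 0]) (simp, smt (verit) divide_nonneg_pos mult_nonneg_nonneg)
    next
      case Bnz: False
      have eE: "e \<in> Einf N A B" using pf(1) True Bnz by (simp add: Einf_def j_def)
      obtain kt where kt: "gclass N A B (res_vertex j \<mu>) (path_res A B k' \<mu>) = gclass N A B (res_vertex j \<mu>) kt"
        "real_of_int \<bar>kt\<bar> \<le> Cb \<or> (set \<mu> \<subseteq> Einf N A B \<and> real_of_int \<bar>kt\<bar> \<le> real_of_int \<bar>k'\<bar> * wt A B \<mu> + tailsum A B \<mu>)"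
        using Cons.IH[OF mu, of k'] by blast
      have "real_of_int \<bar>kt\<bar> \<le> Cb \<or> (set (e # \<mu>) \<subseteq> Einf N A B \<and>
          real_of_int \<bar>kt\<bar> \<le> real_of_int \<bar>k\<bar> * wt A B (e # \<mu>) + tailsum A B (e # \<mu>))"
      proof (cases "real_of_int \<bar>kt\<bar> \<le> Cb")
        case False
        then have sE: "set \<mu> \<subseteq> Einf N A B" and kb: "real_of_int \<bar>kt\<bar> \<le> real_of_int \<bar>k'\<bar> * wt A B \<mu> + tailsum A B \<mu>"
          using kt(2) by auto
        define w where "w = real_of_int \<bar>B (rg e) (sc e)\<bar> / real (A (rg e) (sc e))"
        have k'b: "real_of_int \<bar>k'\<bar> \<le> real_of_int \<bar>k\<bar> * w + 1" unfolding k'_def w_def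
          by (rule edge_res_bound[OF pf(1)])
        have "real_of_int \<bar>k'\<bar> * wt A B \<mu> \<le> (real_of_int \<bar>k\<bar> * w + 1) * wt A B \<mu>"
          using k'b wt_nonneg[of A B \<mu>] by (rule mult_right_mono)
        also have "\<dots> = real_of_int \<bar>k\<bar> * wt A B (e # \<mu>) + wt A B \<mu>"
          by (simp add: wt_Cons w_def algebra_simps)
        finally have "real_of_int \<bar>kt\<bar> \<le> real_of_int \<bar>k\<bar> * wt A B (e # \<mu>) + tailsum A B (e # \<mu>)"
          using kb by simp
        then show ?thesis using sE eE by simp
      qed simp
      then show ?thesis using kt(1) rv pr by auto
    qed
  qed
qed



lemma Pc_contr:
  assumes P: "Pc N A B" shows "contracting N A B"
proof -
  obtain C \<rho> where C: "C \<ge> 1" "0 < \<rho>" "\<rho> < 1"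
    and wb: "\<And>\<mu>. \<mu> \<in> paths_inf N A B (length \<mu>) \<Longrightarrow> wt A B \<mu> \<le> C * \<rho> ^ length \<mu>"
    using weight_bound[OF P] by blast
  define per where "per = (\<lambda>j. if j < N \<and> j \<notin> Vinf N A B then (SOME p. p > 0 \<and> triv N A B j p) else (1::int))"
  define P0 where "P0 = Max (insert 0 ((\<lambda>j. real_of_int (per j)) ` {..<N}))"
  have P00: "P0 \<ge> 0" unfolding P0_def by (intro Max_ge) auto
  have per: "per j > 0 \<and> triv N A B j (per j) \<and> real_of_int (per j) \<le> P0" if "j < N" "j \<notin> Vinf N A B" for j
  proof -
    have "finite (isotropy N A B j)" using that by (simp add: Vinf_def)
    then have "\<exists>p>0. triv N A B j p" by (rule finite_iso_period)
    then have "per j > 0 \<and> triv N A B j (per j)" using that unfolding per_def by (simp, metis (mono_tags, lifting) someI_ex)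
    moreover have "real_of_int (per j) \<le> P0" unfolding P0_def using that by (intro Max_ge) auto
    ultimately show ?thesis by simp
  qed
  define Cb where "Cb = P0 * C + C / (1 - \<rho>) + 1"
  have Cb: "P0 * C + C / (1 - \<rho>) \<le> Cb" by (simp add: Cb_def)
  note claim = contr_claim[OF wb C per Cb P00]
  define F where "F = {g. \<exists>j k. g = gclass N A B j k \<and> j < N \<and> real_of_int \<bar>k\<bar> \<le> Cb}"
  define M where "M = ceiling Cb"
  have FGB: "F \<subseteq> GB N A B" by (auto simp: F_def GB_def)
  have finF: "finite F"
  proof -
    have "F \<subseteq> (\<lambda>(j,k). gclass N A B j k) ` ({..<N} \<times> {-M..M})"
    proof
      fix g assume "g \<in> F"
      then obtain j k where g: "g = gclass N A B j k" "j < N" "real_of_int \<bar>k\<bar> \<le> Cb" by (auto simp: F_def)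
      then have "\<bar>k\<bar> \<le> M" unfolding M_def by linarith
      then have "(j,k) \<in> {..<N} \<times> {-M..M}" using g by auto
      then show "g \<in> (\<lambda>(j,k). gclass N A B j k) ` ({..<N} \<times> {-M..M})" using g by force
    qed
    then show ?thesis by (rule finite_subset) auto
  qed
  have ev: "\<exists>n. \<forall>l\<ge>n. \<forall>\<mu>\<in>paths_from N A i l. gclass N A B (res_vertex i \<mu>) (path_res A B k \<mu>) \<in> F"
    if iN: "i < N" for i k
  proof -
    define y where "y = 1 / (real_of_int \<bar>k\<bar> * C + 1)"
    have kc0: "real_of_int \<bar>k\<bar> * C \<ge> 0" using C by simp
    then have y0: "y > 0" by (simp add: y_def)
    obtain n where n: "\<rho> ^ n < y" using real_arch_pow_inv[OF y0 C(3)] by blast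
    have "\<forall>l\<ge>n. \<forall>\<mu>\<in>paths_from N A i l. gclass N A B (res_vertex i \<mu>) (path_res A B k \<mu>) \<in> F"
    proof (intro allI impI ballI)
      fix l \<mu> assume l: "n \<le> l" and mu: "\<mu> \<in> paths_from N A i l"
      have len: "length \<mu> = l" using mu by (simp add: paths_from_def)
      obtain kt where kt: "gclass N A B (res_vertex i \<mu>) (path_res A B k \<mu>) = gclass N A B (res_vertex i \<mu>) kt"
        "real_of_int \<bar>kt\<bar> \<le> Cb \<or> (set \<mu> \<subseteq> Einf N A B \<and> real_of_int \<bar>kt\<bar> \<le> real_of_int \<bar>k\<bar> * wt A B \<mu> + tailsum A B \<mu>)"
        using claim[of \<mu> i k] mu len by auto
      have "real_of_int \<bar>kt\<bar> \<le> Cb"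
      proof (cases "real_of_int \<bar>kt\<bar> \<le> Cb")
        case False
        then have sE: "set \<mu> \<subseteq> Einf N A B" and kb: "real_of_int \<bar>kt\<bar> \<le> real_of_int \<bar>k\<bar> * wt A B \<mu> + tailsum A B \<mu>"
          using kt(2) by auto
        have PI: "\<mu> \<in> paths_inf N A B (length \<mu>)" using sE mu by (simp add: paths_inf_def paths_from_def)
        have ts: "tailsum A B \<mu> \<le> C / (1 - \<rho>)" using tailsum_bound[OF wb _ C(2) C(3) PI] C(1) by simp
        have "\<rho> ^ l \<le> \<rho> ^ n" using l C by (simp add: power_decreasing)
        then have "wt A B \<mu> \<le> C * y" using wb[OF PI] len n C
          by (smt (verit) mult_left_mono)
        then have "real_of_int \<bar>k\<bar> * wt A B \<mu> \<le> real_of_int \<bar>k\<bar> * (C * y)" by (simp add: mult_left_mono)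
        also have "\<dots> \<le> 1"
        proof -
          have "real_of_int \<bar>k\<bar> * (C * y) = (real_of_int \<bar>k\<bar> * C) / (real_of_int \<bar>k\<bar> * C + 1)"
            by (simp add: y_def)
          also have "\<dots> \<le> 1" using kc0 by (simp add: divide_le_eq_1)
          finally show ?thesis .
        qed
        finally show ?thesis using kb ts P00 C unfolding Cb_def
          by (smt (verit) mult_nonneg_nonneg)
      qed simp
      moreover have "res_vertex i \<mu> < N" by (rule res_vertex_bound[OF mu iN])
      ultimately show "gclass N A B (res_vertex i \<mu>) (path_res A B k \<mu>) \<in> F"
        using kt(1) unfolding F_def by blast
    qed
    then show ?thesis by blast
  qed
  show ?thesis unfolding contracting_def using FGB finF ev by blast
qed

theorem corollary3p2:
  assumes "katsura_pair N A B"
  shows "contracting N A B \<longleftrightarrow>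
    limsup (\<lambda>n. ereal (root n (max_ratio N A B n))) < 1"
proof (cases "Pc N A B")
  case True then show ?thesis using Pc_contr Pc_limsup by blast
next
  case False then show ?thesis using notPc_notcontr notPc_limsup by (metis not_less)
qed


end
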